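(* Let $n=p_1^{\alpha_1}p_2^{\alpha_2}\cdots p_k^{\alpha_k}$ where $p_1,\dots,p_k$ are distinct primes, $\alpha_i\geq 1$, and $k\geq 5$. Then $\mathbb{AG}(\mathbb{Z}_n)$ is not perfect.
   Context: For a commutative ring $R$ with unity, the annihilating-ideal graph $\mathbb{AG}(R)$ is the simple graph whose vertex set is the set of all non-zero ideals of $R$ with non-zero annihilator, two distinct vertices $I,J$ being adjacent if and only if $IJ=0$. A graph $G$ is perfect if $\omega(H)=\chi(H)$ for every induced subgraph $H$ of $G$. *)

theory Defs
  imports "HOL-Algebra.Ideal_Product" "HOL-Number_Theory.Residues" "HOL-Library.Extended_Nat"
begin

definition ann :: "('a, 'b) ring_scheme \<Rightarrow> 'a set \<Rightarrow> 'a set" where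
  "ann R I = {x \<in> carrier R. \<forall>a\<in>I. x \<otimes>\<^bsub>R\<^esub> a = \<zero>\<^bsub>R\<^esub>}"

definition AG_vertices :: "('a, 'b) ring_scheme \<Rightarrow> 'a set set" where
  "AG_vertices R = {I. ideal I R \<and> I \<noteq> {\<zero>\<^bsub>R\<^esub>} \<and> ann R I \<noteq> {\<zero>\<^bsub>R\<^esub>}}"

definition AG_adj :: "('a, 'b) ring_scheme \<Rightarrow> 'a set \<Rightarrow> 'a set \<Rightarrow> bool" where
  "AG_adj R I J \<longleftrightarrow> I \<noteq> J \<and> ideal_prod R I J = {\<zero>\<^bsub>R\<^esub>}"

definition is_clique :: "('v \<Rightarrow> 'v \<Rightarrow> bool) \<Rightarrow> 'v set \<Rightarrow> bool" where
  "is_clique E C \<longleftrightarrow> (\<forall>x\<in>C. \<forall>y\<in>C. x \<noteq> y \<longrightarrow> E x y)"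

definition clique_number :: "'v set \<Rightarrow> ('v \<Rightarrow> 'v \<Rightarrow> bool) \<Rightarrow> enat" where
  "clique_number S E = Sup {enat (card C) | C. C \<subseteq> S \<and> finite C \<and> is_clique E C}"

definition proper_colouring :: "'v set \<Rightarrow> ('v \<Rightarrow> 'v \<Rightarrow> bool) \<Rightarrow> nat \<Rightarrow> ('v \<Rightarrow> nat) \<Rightarrow> bool" where
  "proper_colouring S E k f \<longleftrightarrow>
     (\<forall>x\<in>S. f x < k) \<and> (\<forall>x\<in>S. \<forall>y\<in>S. E x y \<longrightarrow> f x \<noteq> f y)"

definition chromatic_number :: "'v set \<Rightarrow> ('v \<Rightarrow> 'v \<Rightarrow> bool) \<Rightarrow> enat" where
  "chromatic_number S E = Inf {enat k | k. \<exists>f. proper_colouring S E k f}"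

definition perfect_graph :: "'v set \<Rightarrow> ('v \<Rightarrow> 'v \<Rightarrow> bool) \<Rightarrow> bool" where
  "perfect_graph V E \<longleftrightarrow> (\<forall>S\<subseteq>V. clique_number S E = chromatic_number S E)"

end

theory Submission imports Defs begin

definition c5adj :: "nat \<Rightarrow> nat \<Rightarrow> bool" where
  "c5adj i j \<longleftrightarrow> (i + 1) mod 5 = j \<or> (j + 1) mod 5 = i"

definition c5T :: "nat \<Rightarrow> nat set" where
  "c5T i = {i, (i + 2) mod 5}"

lemma five_cases: "i < (5::nat) \<Longrightarrow> i = 0 \<or> i = 1 \<or> i = 2 \<or> i = 3 \<or> i = 4"
  by auto

lemma all_5: "(\<forall>k<(5::nat). P k) \<longleftrightarrow> P 0 \<and> P 1 \<and> P 2 \<and> P 3 \<and> P 4"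
  using five_cases by auto

lemma c5T_sub: "i < 5 \<Longrightarrow> c5T i \<subseteq> {..<5}"
  unfolding c5T_def by auto

lemma c5_adj_T: "i < 5 \<Longrightarrow> j < 5 \<Longrightarrow> c5adj i j \<longleftrightarrow> c5T i \<inter> c5T j = {}"
proof -
  assume "i < 5" "j < 5"
  from five_cases[OF this(1)] five_cases[OF this(2)] show ?thesis
    unfolding c5adj_def c5T_def by (elim disjE) auto
qed

lemma nt_witness:
  fixes n :: nat
  assumes "card (prime_factors n) \<ge> 5"
  shows "\<exists>a :: nat \<Rightarrow> nat. \<forall>i<5. \<forall>j<5. (n dvd a i * a j) \<longleftrightarrow> c5adj i j"
proof -
  have n0: "n \<noteq> 0" using assms by (cases "n = 0") auto
  obtain h where hb: "bij_betw h {0..<card (prime_factors n)} (prime_factors n)"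
    using ex_bij_betw_nat_finite by blast
  define p where "p = h"
  have pin: "p i \<in> prime_factors n" if "i < 5" for i
    using hb that assms unfolding p_def bij_betw_def by auto
  have pprime: "prime (p i)" and pdvd: "p i dvd n" if "i < 5" for i
    using pin[OF that] by (auto simp: in_prime_factors_iff)
  have pinj: "p i = p j \<Longrightarrow> i < 5 \<Longrightarrow> j < 5 \<Longrightarrow> i = j" for i j
    using hb assms unfolding p_def bij_betw_def inj_on_def by auto
  define q where "q i = p i ^ multiplicity (p i) n" for i
  have qdvd: "q i dvd n" for i unfolding q_def by (rule multiplicity_dvd)
  have qnot: "\<not> p i * q i dvd n" if "i < 5" for i
  proof
    assume "p i * q i dvd n"
    then have "p i ^ Suc (multiplicity (p i) n) dvd n" unfolding q_def by simp
    then have "Suc (multiplicity (p i) n) \<le> multiplicity (p i) n"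
      using multiplicity_geI n0 pprime[OF that] by (metis not_prime_unit)
    then show False by simp
  qed
  have qcop: "coprime (q i) (q j)" if "i < 5" "j < 5" "i \<noteq> j" for i j
    unfolding q_def using primes_coprime[OF pprime[OF that(1)] pprime[OF that(2)]] pinj that
    by auto
  have proddvd: "K \<subseteq> {..<5} \<Longrightarrow> (\<Prod>k\<in>K. q k) dvd n" for K
  proof (induction K rule: infinite_finite_induct)
    case (infinite A) then show ?case using finite_subset by blast
  next
    case empty then show ?case by simp
  next
    case (insert x F)
    have "coprime (q x) (\<Prod>k\<in>F. q k)"
      by (rule prod_coprime_right) (use insert qcop in auto)
    then show ?case using insert qdvd by (simp add: divides_mult)
  qed
  define P where "P = (\<Prod>k\<in>{..<5::nat}. q k)"
  have "P dvd n" unfolding P_def by (rule proddvd) simp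
  then obtain r where nPr: "n = P * r" by blast
  define S where "S i = {..<5::nat} - c5T i" for i
  define a where "a i = r * (\<Prod>k\<in>S i. q k)" for i
  have "\<forall>i<5. \<forall>j<5. (n dvd a i * a j) \<longleftrightarrow> c5adj i j"
  proof (intro allI impI)
    fix i j :: nat assume ij: "i < 5" "j < 5"
    show "(n dvd a i * a j) \<longleftrightarrow> c5adj i j"
    proof (cases "c5adj i j")
      case True
      then have "S i \<union> S j = {..<5}" using c5_adj_T[OF ij] unfolding S_def by auto
      then have "(\<Prod>k\<in>S i. q k) * (\<Prod>k\<in>S j. q k) = P * (\<Prod>k\<in>S i \<inter> S j. q k)"
        unfolding P_def S_def by (metis finite_Diff finite_lessThan prod.union_inter)
      then have "a i * a j = n * (r * (\<Prod>k\<in>S i \<inter> S j. q k))"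
        unfolding a_def nPr by (metis mult.assoc mult.left_commute)
      then show ?thesis using True by simp
    next
      case False
      then obtain s where s: "s \<in> c5T i" "s \<in> c5T j" using c5_adj_T[OF ij] by auto
      have s5: "s < 5" using s c5T_sub ij by auto
      have nr: "\<not> p s dvd r"
      proof
        assume "p s dvd r"
        have "P = q s * (\<Prod>k\<in>{..<5} - {s}. q k)"
          unfolding P_def using s5 by (simp add: prod.remove)
        moreover obtain t where t: "r = p s * t" using \<open>p s dvd r\<close> by blast
        ultimately have "n = (p s * q s) * ((\<Prod>k\<in>{..<5} - {s}. q k) * t)"
          unfolding nPr by (simp add: ac_simps)
        then have "p s * q s dvd n" by (metis dvd_triv_left)
        then show False using qnot[OF s5] by simp
      qed
      have nprod: "\<not> p s dvd (\<Prod>k\<in>S l. q k)" if "s \<in> c5T l" for l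
      proof
        assume "p s dvd (\<Prod>k\<in>S l. q k)"
        moreover have "finite (S l)" unfolding S_def by simp
        ultimately obtain k where k: "k \<in> S l" "p s dvd q k"
          using prime_dvd_prod_iff[of "S l" "p s" q] pprime[OF s5] by auto
        have k5: "k < 5" using k unfolding S_def by auto
        have "p s dvd p k" using k(2) prime_dvd_power[OF pprime[OF s5]] unfolding q_def by blast
        then have "p s = p k" using primes_dvd_imp_eq pprime s5 k5 by blast
        then have "s = k" using pinj s5 k5 by blast
        then show False using k(1) that unfolding S_def by auto
      qed
      have "\<not> p s dvd a i * a j"
        using nr nprod[OF s(1)] nprod[OF s(2)] pprime[OF s5]
        unfolding a_def by (simp add: prime_dvd_mult_iff)
      then have "\<not> n dvd a i * a j" using pdvd[OF s5] dvd_trans by blast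
      then show ?thesis using False by simp
    qed
  qed
  then show ?thesis by blast
qed

lemma c5adj_irrefl: "i < 5 \<Longrightarrow> \<not> c5adj i i"
  by (drule five_cases) (auto simp: c5adj_def)

lemma c5_sep:
  assumes "i < 5" "j < 5" "\<forall>k<5. c5adj i k = c5adj j k"
  shows "i = j"
  using five_cases[OF assms(1)] five_cases[OF assms(2)] assms(3)
  unfolding all_5 c5adj_def by (elim disjE) auto

lemma c5_triangle:
  assumes "a < 5" "b < 5" "c < 5" "a \<noteq> b" "a \<noteq> c" "b \<noteq> c"
  shows "\<not> (c5adj a b \<and> c5adj a c \<and> c5adj b c)"
  using five_cases[OF assms(1)] five_cases[OF assms(2)] five_cases[OF assms(3)] assms(4-6)
  unfolding c5adj_def by (elim disjE) auto

lemma c5_not_perfect: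
  fixes x :: "nat \<Rightarrow> 'v" and E :: "'v \<Rightarrow> 'v \<Rightarrow> bool"
  assumes H: "\<forall>i<5. \<forall>j<5. E (x i) (x j) \<longleftrightarrow> c5adj i j"
  shows "clique_number (x ` {..<5}) E \<noteq> chromatic_number (x ` {..<5}) E"
proof -
  have cl: "card C \<le> 2" if C: "C \<subseteq> x ` {..<5}" "finite C" "is_clique E C" for C
  proof (rule ccontr)
    assume "\<not> card C \<le> 2"
    then have "3 \<le> card C" by simp
    then obtain T where T: "T \<subseteq> C" "card T = 3" by (meson obtain_subset_with_card_n)
    then obtain u v w where uvw: "T = {u, v, w}" "u \<noteq> v" "v \<noteq> w" "u \<noteq> w"
      by (auto simp: card_3_iff)
    have "u \<in> x ` {..<5}" "v \<in> x ` {..<5}" "w \<in> x ` {..<5}" using uvw T C by auto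
    then obtain a b c where abc: "a < 5" "b < 5" "c < 5" "u = x a" "v = x b" "w = x c"
      by (metis image_iff lessThan_iff)
    have "a \<noteq> b" "a \<noteq> c" "b \<noteq> c" using abc uvw by auto
    moreover have "E u v" "E u w" "E v w" using C(3) T uvw unfolding is_clique_def by auto
    then have "c5adj a b" "c5adj a c" "c5adj b c" using H abc by auto
    ultimately show False using c5_triangle[OF abc(1-3)] by blast
  qed
  have cn: "clique_number (x ` {..<5}) E \<le> 2"
    unfolding clique_number_def
    by (rule Sup_least) (use cl in \<open>auto simp: numeral_eq_enat\<close>)
  have col: "3 \<le> k" if f: "proper_colouring (x ` {..<5}) E k f" for k f
  proof (rule ccontr)
    assume "\<not> 3 \<le> k"
    have lt: "f (x i) < k" if "i < 5" for i using f that unfolding proper_colouring_def by auto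
    have ne: "f (x i) \<noteq> f (x j)" if "i < 5" "j < 5" "c5adj i j" for i j
      using f that H unfolding proper_colouring_def by auto
    have "f (x 0) \<noteq> f (x 1)" "f (x 1) \<noteq> f (x 2)" "f (x 2) \<noteq> f (x 3)"
      "f (x 3) \<noteq> f (x 4)" "f (x 4) \<noteq> f (x 0)"
      by (rule ne; simp add: c5adj_def)+
    moreover have "f (x 0) < k" "f (x 1) < k" "f (x 2) < k" "f (x 3) < k" "f (x 4) < k"
      by (rule lt; simp)+
    ultimately show False using \<open>\<not> 3 \<le> k\<close> by linarith
  qed
  have ch: "3 \<le> chromatic_number (x ` {..<5}) E"
    unfolding chromatic_number_def
    by (rule Inf_greatest) (use col in \<open>auto simp: numeral_eq_enat\<close>)
  show ?thesis
  proof
    assume eq: "clique_number (x ` {..<5}) E = chromatic_number (x ` {..<5}) E"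
    have "(3::enat) \<le> 2" using cn ch unfolding eq by (rule order_trans[rotated])
    then show False by (simp add: numeral_eq_enat)
  qed
qed

lemma (in cring) PIdl_prod_zero:
  assumes "a \<in> carrier R" "b \<in> carrier R"
  shows "ideal_prod R (PIdl a) (PIdl b) = {\<zero>} \<longleftrightarrow> a \<otimes> b = \<zero>"
proof
  assume "ideal_prod R (PIdl a) (PIdl b) = {\<zero>}"
  moreover have "a \<otimes> b \<in> ideal_prod R (PIdl a) (PIdl b)"
    by (rule ideal_prod.prod) (use cgenideal_self assms in auto)
  ultimately show "a \<otimes> b = \<zero>" by auto
next
  assume ab: "a \<otimes> b = \<zero>"
  have "y = \<zero>" if "y \<in> ideal_prod R (PIdl a) (PIdl b)" for y
    using that
  proof (induction rule: ideal_prod.induct)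
    case (prod i j)
    then obtain u v where uv: "u \<in> carrier R" "v \<in> carrier R" "i = u \<otimes> a" "j = v \<otimes> b"
      unfolding cgenideal_def by auto
    have "i \<otimes> j = (u \<otimes> v) \<otimes> (a \<otimes> b)" using uv assms by (simp add: m_ac)
    then show ?case using ab uv by simp
  next
    case (sum s1 s2) then show ?case by simp
  qed
  moreover have "\<zero> \<in> ideal_prod R (PIdl a) (PIdl b)"
  proof -
    have "\<zero> \<in> PIdl a" unfolding cgenideal_def using assms by (auto intro!: exI[of _ \<zero>])
    moreover have "\<zero> \<in> PIdl b" unfolding cgenideal_def using assms by (auto intro!: exI[of _ \<zero>])
    ultimately have "\<zero> \<otimes> \<zero> \<in> ideal_prod R (PIdl a) (PIdl b)" by (rule ideal_prod.prod)
    then show ?thesis by simp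
  qed
  ultimately show "ideal_prod R (PIdl a) (PIdl b) = {\<zero>}" by blast
qed

theorem lemma1:
  fixes n :: nat
  assumes "card (prime_factors n) \<ge> 5"
  shows "\<not> perfect_graph (AG_vertices (residue_ring (int n))) (AG_adj (residue_ring (int n)))"
proof -
  obtain a :: "nat \<Rightarrow> nat" where a: "\<forall>i<5. \<forall>j<5. (n dvd a i * a j) \<longleftrightarrow> c5adj i j"
    using nt_witness[OF assms] by blast
  have n1: "n > 1"
  proof (rule ccontr)
    assume "\<not> n > 1"
    then have "n = 0 \<or> n = 1" by auto
    then show False using assms by auto
  qed
  define R where "R = residue_ring (int n)"
  interpret residues "int n" R
    by unfold_locales (use n1 R_def in auto)
  define e where "e i = int (a i) mod int n" for i
  have ec: "e i \<in> carrier R" for i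
    unfolding e_def res_carrier_eq using n1 by auto
  have Z: "(e i \<otimes>\<^bsub>R\<^esub> e j = \<zero>\<^bsub>R\<^esub>) \<longleftrightarrow> c5adj i j" if "i < 5" "j < 5" for i j
  proof -
    have "e i \<otimes>\<^bsub>R\<^esub> e j = int (a i * a j) mod int n"
      unfolding res_mult_eq e_def by (simp add: mod_mult_eq)
    then have "(e i \<otimes>\<^bsub>R\<^esub> e j = \<zero>\<^bsub>R\<^esub>) \<longleftrightarrow> int n dvd int (a i * a j)"
      by (simp add: res_zero_eq mod_eq_0_iff_dvd del: of_nat_mult)
    also have "\<dots> \<longleftrightarrow> n dvd a i * a j" by (rule of_nat_dvd_iff)
    finally have "(e i \<otimes>\<^bsub>R\<^esub> e j = \<zero>\<^bsub>R\<^esub>) \<longleftrightarrow> n dvd a i * a j" .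
    then show ?thesis using a that by simp
  qed
  define x where "x i = PIdl\<^bsub>R\<^esub> (e i)" for i
  have H: "\<forall>i<5. \<forall>j<5. AG_adj R (x i) (x j) \<longleftrightarrow> c5adj i j"
  proof (intro allI impI)
    fix i j :: nat assume ij: "i < 5" "j < 5"
    have P: "ideal_prod R (x i) (x j) = {\<zero>\<^bsub>R\<^esub>} \<longleftrightarrow> c5adj i j"
      unfolding x_def using PIdl_prod_zero[OF ec ec] Z[OF ij] by simp
    have "x i \<noteq> x j" if "c5adj i j"
    proof
      assume "x i = x j"
      then have "ideal_prod R (x i) (x i) = {\<zero>\<^bsub>R\<^esub>}" using P that by simp
      then have "c5adj i i" unfolding x_def using PIdl_prod_zero[OF ec ec] Z[OF ij(1) ij(1)] by simp
      then show False using c5adj_irrefl ij by blast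
    qed
    then show "AG_adj R (x i) (x j) \<longleftrightarrow> c5adj i j"
      unfolding AG_adj_def using P by blast
  qed
  have V: "x ` {..<5} \<subseteq> AG_vertices R"
  proof
    fix I assume "I \<in> x ` {..<5}"
    then obtain i where i: "i < 5" "I = x i" by auto
    have enz: "e k \<noteq> \<zero>\<^bsub>R\<^esub>" if "k < 5" for k
    proof
      assume "e k = \<zero>\<^bsub>R\<^esub>"
      have "e k \<otimes>\<^bsub>R\<^esub> e k = \<zero>\<^bsub>R\<^esub>" unfolding \<open>e k = \<zero>\<^bsub>R\<^esub>\<close> by (rule l_null[OF zero_closed])
      then show False using Z[OF that that] c5adj_irrefl that by blast
    qed
    define j where "j = (i + 1) mod 5"
    have j5: "j < 5" unfolding j_def by simp
    have ji: "e j \<otimes>\<^bsub>R\<^esub> e i = \<zero>\<^bsub>R\<^esub>" using Z[OF j5 i(1)] unfolding j_def c5adj_def by simp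
    have "e j \<otimes>\<^bsub>R\<^esub> y = \<zero>\<^bsub>R\<^esub>" if "y \<in> I" for y
    proof -
      have yP: "y \<in> PIdl\<^bsub>R\<^esub> (e i)" using that i(2) unfolding x_def by simp
      obtain u where u0: "y = u \<otimes>\<^bsub>R\<^esub> e i \<and> u \<in> carrier R"
        using yP[unfolded cgenideal_def mem_Collect_eq] by (rule exE)
      have u: "u \<in> carrier R" "y = u \<otimes>\<^bsub>R\<^esub> e i" using u0 by simp_all
      have "e j \<otimes>\<^bsub>R\<^esub> y = u \<otimes>\<^bsub>R\<^esub> (e j \<otimes>\<^bsub>R\<^esub> e i)"
        unfolding u(2) by (rule m_lcomm[OF ec u(1) ec])
      also have "\<dots> = \<zero>\<^bsub>R\<^esub>" unfolding ji by (rule r_null[OF u(1)])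
      finally show ?thesis .
    qed
    then have "e j \<in> ann R I"
      unfolding ann_def using ec by blast
    then have "ann R I \<noteq> {\<zero>\<^bsub>R\<^esub>}" using enz[OF j5] by blast
    moreover have "I \<noteq> {\<zero>\<^bsub>R\<^esub>}" using i cgenideal_self[OF ec] enz[OF i(1)] unfolding x_def by blast
    moreover have "ideal I R" using i cgenideal_ideal[OF ec] unfolding x_def by blast
    ultimately show "I \<in> AG_vertices R" unfolding AG_vertices_def by simp
  qed
  show ?thesis
    unfolding perfect_graph_def R_def[symmetric]
    using V c5_not_perfect[of "AG_adj R" x, OF H] by blast
qed

end
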